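(* Let $G$ be a graph on $n$ vertices with degrees $d_1,\ldots,d_n$ and signless Laplacian eigenvalues $q_1\ge\cdots\ge q_n$, and let $t\ge 1$ be an integer. Then the signless Laplacian eigenvalues of the blow-up $G^{(t)}$, listed with multiplicity (a total of $tn$ values), are $tq_1,\ldots,tq_n$ together with $td_1,\ldots,td_n$, where each $td_i$ ($i=1,\ldots,n$) is taken with multiplicity $t-1$.
   Context: All graphs are simple and undirected. For a graph $H$, $A(H)$ is its adjacency matrix, $D(H)$ the diagonal matrix of its vertex degrees, and $Q(H)=D(H)+A(H)$ its signless Laplacian matrix; signless Laplacian eigenvalues are the eigenvalues of $Q(H)$. For a graph $G$ and an integer $t\ge 1$, the blow-up $G^{(t)}$ is the graph obtained by replacing each vertex $u$ of $G$ by a set $V_u$ of $t$ pairwise nonadjacent vertices, and each edge $\{u,v\}$ of $G$ by a complete bipartite graph with parts $V_u$ and $V_v$ (so $A(G^{(t)})=A(G)\otimes J_t$, with $J_t$ the $t\times t$ all-ones matrix). *)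

theory Defs
  imports "Jordan_Normal_Form.Char_Poly"
begin

text \<open>A simple graph on vertex set {0..<n} is given by an edge relation E that is
  symmetric and irreflexive on {0..<n}; values of E outside {0..<n} are irrelevant.\<close>

definition simple_graph :: "nat \<Rightarrow> (nat \<Rightarrow> nat \<Rightarrow> bool) \<Rightarrow> bool" where
  "simple_graph n E \<longleftrightarrow> (\<forall>i<n. \<forall>j<n. E i j = E j i) \<and> (\<forall>i<n. \<not> E i i)"

definition degree_of :: "nat \<Rightarrow> (nat \<Rightarrow> nat \<Rightarrow> bool) \<Rightarrow> nat \<Rightarrow> nat" where
  "degree_of n E i = card {j. j < n \<and> E i j}"

definition adjacency_matrix :: "nat \<Rightarrow> (nat \<Rightarrow> nat \<Rightarrow> bool) \<Rightarrow> real mat" where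
  "adjacency_matrix n E = mat n n (\<lambda>(i, j). if E i j then 1 else 0)"

definition degree_matrix :: "nat \<Rightarrow> (nat \<Rightarrow> nat \<Rightarrow> bool) \<Rightarrow> real mat" where
  "degree_matrix n E = mat n n (\<lambda>(i, j). if i = j then real (degree_of n E i) else 0)"

definition signless_laplacian :: "nat \<Rightarrow> (nat \<Rightarrow> nat \<Rightarrow> bool) \<Rightarrow> real mat" where
  "signless_laplacian n E = degree_matrix n E + adjacency_matrix n E"

text \<open>Eigenvalues listed with (algebraic) multiplicity: the multiset of roots of the
  characteristic polynomial. For real symmetric matrices all roots are real.\<close>
definition eigenvalues_mset :: "real mat \<Rightarrow> real multiset" where
  "eigenvalues_mset A = proots (char_poly A)"

text \<open>Blow-up G^(t): vertex u of G is replaced by V_u = {u*t ..< u*t + t}; the vertex k of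
  the blow-up (k < n*t) lies in V_(k div t). Two vertices are adjacent iff their
  classes are adjacent in G, so A(G^(t)) = A(G) \<otimes> J_t.\<close>
definition blow_up :: "nat \<Rightarrow> (nat \<Rightarrow> nat \<Rightarrow> bool) \<Rightarrow> nat \<Rightarrow> nat \<Rightarrow> bool" where
  "blow_up t E k l = E (k div t) (l div t)"

end

theory Submission
  imports Defs
begin


lemma pcompose_power_left': "pcompose (p ^ k) q = (pcompose p q) ^ k"
  by (induction k) (auto simp: pcompose_mult pcompose_1)

lemma lin_dvd_pcompose:
  fixes p :: "real poly"
  assumes d: "d \<noteq> 0" and dv: "[:-a,1:]^k dvd p"
  shows "[:-(a/d),1:]^k dvd pcompose p [:0,d:]"
proof -
  obtain r where r: "p = [:-a,1:]^k * r" using dv by (auto simp: dvd_def)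
  have l: "pcompose [:-a,1:] [:0,d:] = Polynomial.smult d [:-(a/d),1:]"
    using d by simp
  have "pcompose p [:0,d:] = (pcompose [:-a,1:] [:0,d:])^k * pcompose r [:0,d:]"
    unfolding r by (simp add: pcompose_mult pcompose_power_left')
  also have "\<dots> = Polynomial.smult (d^k) ([:-(a/d),1:]^k * pcompose r [:0,d:])"
    unfolding l by (simp only: smult_power mult_smult_left)
  finally show ?thesis using d by (simp add: dvd_smult)
qed

lemma order_pcompose_lin:
  fixes p :: "real poly"
  assumes c: "c \<noteq> 0" and p: "p \<noteq> 0"
  shows "order y (pcompose p [:0, 1/c:]) = order (y/c) p"
proof -
  have comp: "pcompose (pcompose p [:0,1/c:]) [:0,c:] = p"
    using c by (simp add: pcompose_assoc[symmetric])
  have nz: "pcompose p [:0,1/c:] \<noteq> 0"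
    using comp p by auto
  have 1: "[:-y,1:]^(order (y/c) p) dvd pcompose p [:0,1/c:]"
    using lin_dvd_pcompose[of "1/c" "y/c" "order (y/c) p" p] c order_1[of "y/c" p] by simp
  have 2: "[:-(y/c),1:]^(order y (pcompose p [:0,1/c:])) dvd p"
    using lin_dvd_pcompose[OF c order_1[of y "pcompose p [:0,1/c:]"]] comp by simp
  show ?thesis using 1 2 nz p by (simp add: order_divides le_antisym)
qed



lemma char_poly_nz: "A \<in> carrier_mat n n \<Longrightarrow> char_poly (A::real mat) \<noteq> 0"
  using degree_monic_char_poly[of A n] by auto

lemma char_poly_smult_mat:
  fixes A :: "real mat"
  assumes A: "A \<in> carrier_mat n n" and c: "c \<noteq> 0"
  shows "char_poly (c \<cdot>\<^sub>m A) = Polynomial.smult (c^n) (pcompose (char_poly A) [:0, 1/c:])"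
proof (rule poly_eq_poly_eq_iff[THEN iffD1], rule ext)
  fix x
  have cA: "c \<cdot>\<^sub>m A \<in> carrier_mat n n" using A by simp
  have M: "- char_matrix (c \<cdot>\<^sub>m A) x = c \<cdot>\<^sub>m (- char_matrix A (x/c))"
    by (rule eq_matI, insert A c, auto simp: char_matrix_def field_simps)
  have "poly (char_poly (c \<cdot>\<^sub>m A)) x = det (- char_matrix (c \<cdot>\<^sub>m A) x)"
    by (rule char_poly_matrix[OF cA])
  also have "\<dots> = c^n * det (- char_matrix A (x/c))"
    unfolding M using A by (simp add: char_matrix_def)
  also have "\<dots> = c^n * poly (char_poly A) (x/c)"
    using char_poly_matrix[OF A, of "x/c"] by simp
  finally show "poly (char_poly (c \<cdot>\<^sub>m A)) x = poly (Polynomial.smult (c^n) (pcompose (char_poly A) [:0, 1/c:])) x"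
    by (simp add: poly_pcompose)
qed

lemma proots_char_poly_smult:
  fixes A :: "real mat"
  assumes A: "A \<in> carrier_mat n n" and c: "c \<noteq> 0"
  shows "proots (char_poly (c \<cdot>\<^sub>m A)) = image_mset ((*) c) (proots (char_poly A))"
proof (rule multiset_eqI)
  fix y
  have nz: "char_poly A \<noteq> 0" by (rule char_poly_nz[OF A])
  have "count (proots (char_poly (c \<cdot>\<^sub>m A))) y = order (y/c) (char_poly A)"
    unfolding char_poly_smult_mat[OF A c] using c nz
    by (simp add: order_smult order_pcompose_lin pcompose_eq_0_iff)
  also have "\<dots> = count (image_mset ((*) c) (proots (char_poly A))) y"
  proof -
    have "((*) c) -` {y} = {y/c}" using c by (auto simp: field_simps)
    then show ?thesis using nz
      by (auto simp: count_image_mset Int_insert_left order_0I)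
  qed
  finally show "count (proots (char_poly (c \<cdot>\<^sub>m A))) y = count (image_mset ((*) c) (proots (char_poly A))) y" .
qed



lemma char_poly_four_block_ll0:
  fixes A1 :: "real mat"
  assumes A1: "A1 \<in> carrier_mat n n" and A2: "A2 \<in> carrier_mat n m" and A4: "A4 \<in> carrier_mat m m"
  shows "char_poly (four_block_mat A1 A2 (0\<^sub>m m n) A4) = char_poly A1 * char_poly A4"
proof -
  have "char_poly_matrix (four_block_mat A1 A2 (0\<^sub>m m n) A4) =
    four_block_mat (char_poly_matrix A1) (map_mat (\<lambda>a. [:-a:]) A2) (0\<^sub>m m n) (char_poly_matrix A4)"
    by (rule eq_matI, insert A1 A2 A4, auto simp: char_poly_matrix_def index_mat_four_block)
  then show ?thesis unfolding char_poly_def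
    by (simp, intro det_four_block_mat_lower_left_zero, insert A1 A2 A4, auto)
qed

lemma char_poly_diag:
  "char_poly (mat m m (\<lambda>(i,j). if i = j then f i else (0::real))) = (\<Prod>a \<leftarrow> map f [0..<m]. [:- a, 1:])"
proof -
  have "char_poly (mat m m (\<lambda>(i,j). if i = j then f i else (0::real))) =
     (\<Prod>a \<leftarrow> diag_mat (mat m m (\<lambda>(i,j). if i = j then f i else (0::real))). [:- a, 1:])"
    by (rule char_poly_upper_triangular[of _ m], auto simp: upper_triangular_def)
  also have "diag_mat (mat m m (\<lambda>(i,j). if i = j then f i else (0::real))) = map f [0..<m]"
    by (rule nth_equalityI, auto simp: diag_mat_def)
  finally show ?thesis .
qed

lemma proots_lin_prod: "proots (\<Prod>a \<leftarrow> xs. [:- a, 1:]) = mset (xs :: real list)"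
proof (induction xs)
  case (Cons a xs)
  have nz: "(\<Prod>a \<leftarrow> xs. [:- a, 1:]) \<noteq> (0 :: real poly)"
    by (auto simp: prod_list_zero_iff)
  have "proots (\<Prod>a \<leftarrow> a#xs. [:- a, 1:]) = proots ([:- a, 1:] * (\<Prod>a \<leftarrow> xs. [:- a, 1:]))" by simp
  also have "\<dots> = proots [:- a, 1:] + proots (\<Prod>a \<leftarrow> xs. [:- a, 1:])"
    by (rule proots_mult, insert nz, auto)
  also have "\<dots> = mset (a#xs)" using Cons.IH by simp
  finally show ?case .
qed simp

lemma proots_char_poly_diag:
  "proots (char_poly (mat m m (\<lambda>(i,j). if i = j then f i else (0::real)))) = mset (map f [0..<m])"
  unfolding char_poly_diag proots_lin_prod ..



lemma det_permute_both:
  fixes C :: "'a :: comm_ring_1 mat"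
  assumes C: "C \<in> carrier_mat n n" and p: "p permutes {0..<n}"
  shows "det (mat n n (\<lambda>(i,j). C $$ (p i, p j))) = det C"
proof -
  have pn: "\<And>i. i < n \<Longrightarrow> p i < n" using p by (simp add: permutes_in_image)
  let ?C1 = "mat n n (\<lambda>(i,j). C $$ (i, p j))"
  have C1: "?C1 \<in> carrier_mat n n" by simp
  have "mat n n (\<lambda>(i,j). C $$ (p i, p j)) = mat n n (\<lambda>(i,j). ?C1 $$ (p i, j))"
    by (rule eq_matI, auto simp: pn)
  hence "det (mat n n (\<lambda>(i,j). C $$ (p i, p j))) = signof p * det ?C1"
    using det_permute_rows[OF C1 p] by simp
  also have "det ?C1 = det (transpose_mat ?C1)" using det_transpose[OF C1] by simp
  also have "transpose_mat ?C1 = mat n n (\<lambda>(i,j). (transpose_mat C) $$ (p i, j))"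
    by (rule eq_matI, insert C, auto simp: pn)
  also have "det \<dots> = signof p * det (transpose_mat C)"
    by (rule det_permute_rows[OF _ p], insert C, auto)
  also have "det (transpose_mat C) = det C" using det_transpose[OF C] by simp
  finally show ?thesis by (cases rule: sign_cases[of p], auto)
qed

lemma char_poly_permute:
  fixes A :: "'a :: comm_ring_1 mat"
  assumes A: "A \<in> carrier_mat n n" and p: "p permutes {0..<n}"
  shows "char_poly (mat n n (\<lambda>(i,j). A $$ (p i, p j))) = char_poly A"
proof -
  have pn: "\<And>i. i < n \<Longrightarrow> p i < n" using p by (simp add: permutes_in_image)
  have inj: "\<And>i j. p i = p j \<longleftrightarrow> i = j" using p by (meson permutes_inj injD)
  have "char_poly_matrix (mat n n (\<lambda>(i,j). A $$ (p i, p j))) =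
     mat n n (\<lambda>(i,j). (char_poly_matrix A) $$ (p i, p j))"
    by (rule eq_matI, insert A, auto simp: pn inj char_poly_matrix_def)
  then show ?thesis unfolding char_poly_def
    using det_permute_both[OF char_poly_matrix_closed[OF A] p] by simp
qed



lemma card_blocks:
  assumes t: "t > 0"
  shows "card {l. l < n*t \<and> P (l div t)} = t * card {j. j < n \<and> P j}"
proof -
  let ?f = "\<lambda>(j,a). j*t + a"
  have eq: "{l. l < n*t \<and> P (l div t)} = ?f ` ({j. j < n \<and> P j} \<times> {..<t})"
  proof (intro equalityI subsetI)
    fix l assume l: "l \<in> {l. l < n*t \<and> P (l div t)}"
    have "l div t < n" using l t by (simp add: less_mult_imp_div_less)
    moreover have "l = ?f (l div t, l mod t)" by simp
    ultimately show "l \<in> ?f ` ({j. j < n \<and> P j} \<times> {..<t})" using l t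
      by (intro image_eqI[of _ _ "(l div t, l mod t)"]) auto
  next
    fix l assume "l \<in> ?f ` ({j. j < n \<and> P j} \<times> {..<t})"
    then obtain j a where l: "l = j*t + a" "j < n" "P j" "a < t" by auto
    have "j*t + a < (j+1)*t" using l by simp
    also have "\<dots> \<le> n*t" using l by (intro mult_le_mono1) simp
    finally show "l \<in> {l. l < n*t \<and> P (l div t)}" using l t by simp
  qed
  have inj: "inj_on ?f ({j. j < n \<and> P j} \<times> {..<t})"
  proof (rule inj_onI, clarify)
    fix j a j' a' assume h: "a < t" "a' < t" "j*t + a = j'*t + a'"
    have "j = (j*t + a) div t" using h(1) by simp
    also have "\<dots> = j'" using h by simp
    finally show "j = j' \<and> a = a'" using h by simp
  qed
  show ?thesis unfolding eq card_image[OF inj] card_cartesian_product by simp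
qed

lemma degree_blow_up:
  assumes t: "t > 0" and i: "i < n*t"
  shows "degree_of (n*t) (blow_up t E) i = t * degree_of n E (i div t)"
  unfolding degree_of_def blow_up_def using card_blocks[OF t, of n "E (i div t)"] by simp

lemma mset_blocks:
  "mset (map (\<lambda>i. f (i div s)) [0..<n*s]) = repeat_mset s (image_mset f (mset_set {0..<n}))"
proof (induction n)
  case (Suc n)
  have "[0..<Suc n * s] = [0..<n*s] @ [n*s..<n*s + s]"
    using upt_add_eq_append[of 0 "n*s" s] by (simp add: add.commute)
  moreover have "map (\<lambda>i. f (i div s)) [n*s..<n*s + s] = replicate s (f n)"
    by (rule nth_equalityI, auto simp: nth_append)
  moreover have "mset_set {0..<Suc n} = add_mset n (mset_set {0..<n})" by (simp add: atLeastLessThanSuc)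
  ultimately show ?case using Suc by (simp add: repeat_mset_distrib_add_mset)
qed simp



definition Nm :: "nat \<Rightarrow> nat \<Rightarrow> real mat" where
  "Nm N t = mat N N (\<lambda>(i,k). if k = (i div t)*t \<and> i mod t \<noteq> 0 then 1 else 0)"

lemma Nm_carrier[simp]: "Nm N t \<in> carrier_mat N N" unfolding Nm_def by simp

lemma left_mult:
  assumes Y: "Y \<in> carrier_mat N N" and i: "i < N" and k: "k < N"
  shows "((1\<^sub>m N + c \<cdot>\<^sub>m Nm N t) * Y) $$ (i,k) = Y $$ (i,k) + (if i mod t \<noteq> 0 then c * Y $$ ((i div t)*t, k) else 0)"
proof -
  have it: "(i div t)*t < N" using i by (meson le_less_trans div_times_less_eq_dividend)
  have "((1\<^sub>m N + c \<cdot>\<^sub>m Nm N t) * Y) $$ (i,k) =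
     (\<Sum>j\<in>{0..<N}. ((if i = j then 1 else 0) + c * (if j = (i div t)*t \<and> i mod t \<noteq> 0 then 1 else 0)) * Y $$ (j,k))"
    using Y i k by (auto simp: scalar_prod_def Nm_def intro!: sum.cong)
  also have "\<dots> = (\<Sum>j\<in>{0..<N}. (if i = j then Y $$ (j,k) else 0)) + 
      (\<Sum>j\<in>{0..<N}. (if j = (i div t)*t then (if i mod t \<noteq> 0 then c * Y $$ (j,k) else 0) else 0))"
    unfolding sum.distrib[symmetric] by (rule sum.cong, auto simp: algebra_simps)
  also have "\<dots> = Y $$ (i,k) + (if i mod t \<noteq> 0 then c * Y $$ ((i div t)*t, k) else 0)"
    using i it by (simp add: sum.delta')
  finally show ?thesis .
qed

lemma right_mult:
  assumes X: "X \<in> carrier_mat N N" and i: "i < N" and k: "k < N" and N: "N = n*t" and t: "t > 0"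
  shows "(X * (1\<^sub>m N + 1 \<cdot>\<^sub>m Nm N t)) $$ (i,k) = X $$ (i,k) + (if k mod t = 0 then (\<Sum>a\<in>{1..<t}. X $$ (i, k+a)) else 0)"
proof -
  let ?P = "\<lambda>j. k = (j div t)*t \<and> j mod t \<noteq> 0"
  have "(X * (1\<^sub>m N + 1 \<cdot>\<^sub>m Nm N t)) $$ (i,k) =
     (\<Sum>j\<in>{0..<N}. X $$ (i,j) * ((if j = k then 1 else 0) + (if ?P j then 1 else 0)))"
    using X i k by (auto simp: scalar_prod_def Nm_def intro!: sum.cong)
  also have "\<dots> = (\<Sum>j\<in>{0..<N}. (if k = j then X $$ (i,j) else 0)) + (\<Sum>j\<in>{0..<N}. (if ?P j then X $$ (i,j) else 0))"
    unfolding sum.distrib[symmetric] by (rule sum.cong, auto simp: algebra_simps)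
  also have "(\<Sum>j\<in>{0..<N}. (if k = j then X $$ (i,j) else 0)) = X $$ (i,k)"
    using k by (simp add: sum.delta)
  also have "(\<Sum>j\<in>{0..<N}. (if ?P j then X $$ (i,j) else 0)) = (\<Sum>j\<in>{j\<in>{0..<N}. ?P j}. X $$ (i,j))"
    by (rule sum.inter_filter[symmetric]) simp
  also have "{j\<in>{0..<N}. ?P j} = (if k mod t = 0 then (\<lambda>a. k + a) ` {1..<t} else {})"
  proof (cases "k mod t = 0")
    case True
    have "{j\<in>{0..<N}. ?P j} = (\<lambda>a. k + a) ` {1..<t}"
    proof (intro equalityI subsetI)
      fix j assume j: "j \<in> {j\<in>{0..<N}. ?P j}"
      then have "j = k + j mod t" using div_mult_mod_eq[of j t] by auto
      moreover have "j mod t \<in> {1..<t}" using j t by auto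
      ultimately show "j \<in> (\<lambda>a. k + a) ` {1..<t}" by blast
    next
      fix j assume "j \<in> (\<lambda>a. k + a) ` {1..<t}"
      then obtain a where a0: "a \<in> {1..<t}" "j = k + a" by blast
      then have a: "j = k + a" "1 \<le> a" "a < t" by auto
      obtain u where u: "k = u*t" using True by (metis mult.commute mod_eq_0_iff_dvd dvd_def)
      have un: "u < n" using k u N t by simp
      have "j < (u+1)*t" using a u by simp
      also have "\<dots> \<le> N" unfolding N using un by (intro mult_le_mono1) simp
      finally have "j < N" .
      moreover have "j div t = u" "j mod t = a" using a u t by auto
      ultimately show "j \<in> {j\<in>{0..<N}. ?P j}" using a u by auto
    qed
    then show ?thesis using True by simp
  next
    case False
    have "\<not> ?P j" for j using False by auto
    then show ?thesis using False by auto
  qed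
  finally show ?thesis by (simp add: sum.reindex del: image_add_atLeastLessThan)
qed



definition Am :: "(nat \<Rightarrow> nat \<Rightarrow> bool) \<Rightarrow> nat \<Rightarrow> nat \<Rightarrow> real" where
  "Am E v u = (if E v u then 1 else 0)"

definition Bm :: "nat \<Rightarrow> nat \<Rightarrow> (nat \<Rightarrow> nat \<Rightarrow> bool) \<Rightarrow> real mat" where
  "Bm n t E = mat (n*t) (n*t) (\<lambda>(i,k).
     if k mod t = 0 then (if i mod t = 0 then real t * ((if i div t = k div t then real (degree_of n E (k div t)) else 0) + Am E (i div t) (k div t)) else 0)
     else (if i mod t = 0 then Am E (i div t) (k div t)
           else (if i div t = k div t \<and> i mod t = k mod t then real t * real (degree_of n E (k div t)) else 0)))"

lemma Bm_carrier[simp]: "Bm n t E \<in> carrier_mat (n*t) (n*t)" unfolding Bm_def by simp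

lemma Qb_entry:
  assumes t: "t > 0" and i: "i < n*t" and k: "k < n*t"
  shows "signless_laplacian (n*t) (blow_up t E) $$ (i,k) =
     (if i = k then real t * real (degree_of n E (i div t)) else 0) + Am E (i div t) (k div t)"
  using i k degree_blow_up[OF t i, of E]
  by (auto simp: signless_laplacian_def degree_matrix_def adjacency_matrix_def Am_def blow_up_def)

lemma Q_entry:
  assumes v: "v < n" and u: "u < n"
  shows "signless_laplacian n E $$ (v,u) = (if v = u then real (degree_of n E v) else 0) + Am E v u"
  using v u by (simp add: signless_laplacian_def degree_matrix_def adjacency_matrix_def Am_def)

lemma sum_ind_shift:
  fixes i k :: nat assumes "finite A"
  shows "(\<Sum>a\<in>A. (if i = k + a then c else 0::real)) = (if k \<le> i \<and> i - k \<in> A then c else 0)"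
proof -
  have "(\<Sum>a\<in>A. (if i = k + a then c else 0::real)) = (\<Sum>a\<in>A. (if a = i - k then (if k \<le> i then c else 0) else 0))"
    by (rule sum.cong, auto)
  also have "\<dots> = (if k \<le> i \<and> i - k \<in> A then c else 0)"
    using assms by (auto simp: sum.delta')
  finally show ?thesis .
qed



lemma block_cond:
  fixes i k t :: nat
  assumes t: "t > 0" and k: "k mod t = 0"
  shows "(k \<le> i \<and> i - k \<in> {1..<t}) \<longleftrightarrow> (i div t = k div t \<and> i mod t \<noteq> 0)"
proof -
  obtain u where u: "k = u*t" using k by (metis mult.commute mod_eq_0_iff_dvd dvd_def)
  show ?thesis
  proof
    assume h: "k \<le> i \<and> i - k \<in> {1..<t}"
    define r where "r = i - k"
    have r: "1 \<le> r" "r < t" using h r_def by auto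
    have ir: "i = r + u*t" using h u r_def by simp
    have "i div t = u" unfolding ir using r t by simp
    moreover have "i mod t = r" unfolding ir using r t by simp
    ultimately show "i div t = k div t \<and> i mod t \<noteq> 0" using u r t by simp
  next
    assume h: "i div t = k div t \<and> i mod t \<noteq> 0"
    have "i = i mod t + (i div t) * t" by simp
    also have "i div t = u" using h u t by simp
    finally have ir: "i = i mod t + k" using u by simp
    have "i mod t < t" using t by simp
    moreover have "i - k = i mod t" using ir by linarith
    ultimately show "k \<le> i \<and> i - k \<in> {1..<t}" using h ir by auto
  qed
qed

lemma eq_div_mod: "t > 0 \<Longrightarrow> (i = (k::nat)) \<longleftrightarrow> (i div t = k div t \<and> i mod t = k mod t)"
  by (metis div_mult_mod_eq)



lemma Nm_dims[simp]: "dim_row (Nm N t) = N" "dim_col (Nm N t) = N" unfolding Nm_def by auto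

lemma Qb_S:
  fixes n t :: nat
  assumes t: "t > 0"
  defines "N \<equiv> n*t"
  shows "signless_laplacian N (blow_up t E) * (1\<^sub>m N + 1 \<cdot>\<^sub>m Nm N t) = (1\<^sub>m N + 1 \<cdot>\<^sub>m Nm N t) * Bm n t E"
proof (rule eq_matI)
  let ?Qb = "signless_laplacian N (blow_up t E)"
  have Qb: "?Qb \<in> carrier_mat N N"
    by (simp add: signless_laplacian_def degree_matrix_def adjacency_matrix_def)
  have B: "Bm n t E \<in> carrier_mat N N" unfolding N_def by simp
  show "dim_row (?Qb * (1\<^sub>m N + 1 \<cdot>\<^sub>m Nm N t)) = dim_row ((1\<^sub>m N + 1 \<cdot>\<^sub>m Nm N t) * Bm n t E)"
    using Qb by (simp add: Nm_def)
  show "dim_col (?Qb * (1\<^sub>m N + 1 \<cdot>\<^sub>m Nm N t)) = dim_col ((1\<^sub>m N + 1 \<cdot>\<^sub>m Nm N t) * Bm n t E)"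
    using B by (simp add: Nm_def)
  fix i k assume "i < dim_row ((1\<^sub>m N + 1 \<cdot>\<^sub>m Nm N t) * Bm n t E)" "k < dim_col ((1\<^sub>m N + 1 \<cdot>\<^sub>m Nm N t) * Bm n t E)"
  then have i: "i < N" and k: "k < N" using B by auto
  have R: "(?Qb * (1\<^sub>m N + 1 \<cdot>\<^sub>m Nm N t)) $$ (i,k) = ?Qb $$ (i,k) + (if k mod t = 0 then (\<Sum>a\<in>{1..<t}. ?Qb $$ (i, k+a)) else 0)"
    by (rule right_mult[OF Qb i k N_def[THEN meta_eq_to_obj_eq] t])
  have L: "((1\<^sub>m N + 1 \<cdot>\<^sub>m Nm N t) * Bm n t E) $$ (i,k) = Bm n t E $$ (i,k) + (if i mod t \<noteq> 0 then 1 * Bm n t E $$ ((i div t)*t, k) else 0)"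
    by (rule left_mult[OF B i k])
  have it: "(i div t)*t < N" using i by (meson le_less_trans div_times_less_eq_dividend)
  let ?d = "\<lambda>u. real (degree_of n E u)"
  show "(?Qb * (1\<^sub>m N + 1 \<cdot>\<^sub>m Nm N t)) $$ (i,k) = ((1\<^sub>m N + 1 \<cdot>\<^sub>m Nm N t) * Bm n t E) $$ (i,k)"
  proof (cases "k mod t = 0")
    case True
    obtain u where u: "k = u*t" using True by (metis mult.commute mod_eq_0_iff_dvd dvd_def)
    have un: "u < n" using k u t unfolding N_def by simp
    have ka: "k + a < N" if "a < t" for a
    proof -
      have "k + a < (u+1)*t" using that u by simp
      also have "\<dots> \<le> N" unfolding N_def using un by (intro mult_le_mono1) simp
      finally show ?thesis .
    qed
    have kad: "(k + a) div t = k div t" if "a < t" for a using that u t by simp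
    have "(\<Sum>a\<in>{1..<t}. ?Qb $$ (i, k+a)) =
       (\<Sum>a\<in>{1..<t}. (if i = k + a then real t * ?d (i div t) else 0) + Am E (i div t) (k div t))"
      by (rule sum.cong[OF refl], insert ka kad i t, auto simp: Qb_entry N_def)
    also have "\<dots> = (if k \<le> i \<and> i - k \<in> {1..<t} then real t * ?d (i div t) else 0) + real (t - 1) * Am E (i div t) (k div t)"
      by (simp add: sum.distrib sum_ind_shift)
    also have "\<dots> = (if i div t = k div t \<and> i mod t \<noteq> 0 then real t * ?d (i div t) else 0) + real (t - 1) * Am E (i div t) (k div t)"
      using block_cond[OF t True] by simp
    finally have S: "(\<Sum>a\<in>{1..<t}. ?Qb $$ (i, k+a)) = \<dots>" .
    have Qik: "?Qb $$ (i,k) = (if i div t = k div t \<and> i mod t = 0 then real t * ?d (i div t) else 0) + Am E (i div t) (k div t)"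
      using Qb_entry[OF t, of i n k E] i k True eq_div_mod[OF t, of i k] unfolding N_def by simp
    have tt: "real (t - 1) = real t - 1" using t by (simp add: of_nat_diff)
    have Bi: "Bm n t E $$ (i,k) = (if i mod t = 0 then real t * ((if i div t = k div t then ?d (k div t) else 0) + Am E (i div t) (k div t)) else 0)"
      using i k True unfolding Bm_def N_def by simp
    have Bt: "Bm n t E $$ ((i div t)*t,k) = real t * ((if i div t = k div t then ?d (k div t) else 0) + Am E (i div t) (k div t))"
      using it k True t unfolding Bm_def N_def by simp
    show ?thesis unfolding R L S Qik Bi Bt using True t
      by (cases "i mod t = 0"; cases "i div t = k div t"; simp add: tt algebra_simps)
  next
    case False
    have Qik: "?Qb $$ (i,k) = (if i div t = k div t \<and> i mod t = k mod t then real t * ?d (k div t) else 0) + Am E (i div t) (k div t)"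
      using Qb_entry[OF t, of i n k E] i k eq_div_mod[OF t, of i k] unfolding N_def by auto
    have Bi: "Bm n t E $$ (i,k) = (if i mod t = 0 then Am E (i div t) (k div t)
           else (if i div t = k div t \<and> i mod t = k mod t then real t * ?d (k div t) else 0))"
      using i k False unfolding Bm_def N_def by simp
    have Bt: "Bm n t E $$ ((i div t)*t,k) = Am E (i div t) (k div t)"
      using it k False t unfolding Bm_def N_def by simp
    show ?thesis unfolding R L Qik Bi Bt using False t
      by (cases "i mod t = 0"; simp)
  qed
qed



lemma ST_inv:
  fixes n t :: nat
  assumes t: "t > 0"
  defines "N \<equiv> n*t"
  shows "(1\<^sub>m N + 1 \<cdot>\<^sub>m Nm N t) * (1\<^sub>m N + (-1) \<cdot>\<^sub>m Nm N t) = 1\<^sub>m N"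
    and "(1\<^sub>m N + (-1) \<cdot>\<^sub>m Nm N t) * (1\<^sub>m N + 1 \<cdot>\<^sub>m Nm N t) = 1\<^sub>m N"
proof -
  have C1: "1\<^sub>m N + 1 \<cdot>\<^sub>m Nm N t \<in> carrier_mat N N" by simp
  have C2: "1\<^sub>m N + (-1) \<cdot>\<^sub>m Nm N t \<in> carrier_mat N N" by simp
  have it: "(i div t)*t < N" if "i < N" for i using that by (meson le_less_trans div_times_less_eq_dividend)
  show "(1\<^sub>m N + 1 \<cdot>\<^sub>m Nm N t) * (1\<^sub>m N + (-1) \<cdot>\<^sub>m Nm N t) = 1\<^sub>m N"
  proof (rule eq_matI)
    fix i k assume "i < dim_row (1\<^sub>m N)" "k < dim_col (1\<^sub>m N)"
    then have i: "i < N" and k: "k < N" by auto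
    show "((1\<^sub>m N + 1 \<cdot>\<^sub>m Nm N t) * (1\<^sub>m N + (-1) \<cdot>\<^sub>m Nm N t)) $$ (i,k) = 1\<^sub>m N $$ (i,k)"
      unfolding left_mult[OF C2 i k] using i k it[OF i] t by (auto simp: Nm_def)
  qed auto
  show "(1\<^sub>m N + (-1) \<cdot>\<^sub>m Nm N t) * (1\<^sub>m N + 1 \<cdot>\<^sub>m Nm N t) = 1\<^sub>m N"
  proof (rule eq_matI)
    fix i k assume "i < dim_row (1\<^sub>m N)" "k < dim_col (1\<^sub>m N)"
    then have i: "i < N" and k: "k < N" by auto
    show "((1\<^sub>m N + (-1) \<cdot>\<^sub>m Nm N t) * (1\<^sub>m N + 1 \<cdot>\<^sub>m Nm N t)) $$ (i,k) = 1\<^sub>m N $$ (i,k)"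
      unfolding left_mult[OF C1 i k] using i k it[OF i] t by (auto simp: Nm_def)
  qed auto
qed

lemma similar_Qb_Bm:
  fixes n t :: nat
  assumes t: "t > 0"
  shows "similar_mat (signless_laplacian (n*t) (blow_up t E)) (Bm n t E)"
proof -
  define N where "N = n*t"
  let ?S = "1\<^sub>m N + 1 \<cdot>\<^sub>m Nm N t"
  let ?T = "1\<^sub>m N + (-1) \<cdot>\<^sub>m Nm N t"
  let ?Qb = "signless_laplacian N (blow_up t E)"
  have Qb: "?Qb \<in> carrier_mat N N"
    by (simp add: signless_laplacian_def degree_matrix_def adjacency_matrix_def)
  have B: "Bm n t E \<in> carrier_mat N N" unfolding N_def by simp
  have S: "?S \<in> carrier_mat N N" and T: "?T \<in> carrier_mat N N" by auto
  have ST: "?S * ?T = 1\<^sub>m N" and TS: "?T * ?S = 1\<^sub>m N" using ST_inv[OF t, of n] unfolding N_def by auto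
  have QS: "?Qb * ?S = ?S * Bm n t E" using Qb_S[OF t, of n E] unfolding N_def by simp
  have "?Qb = ?Qb * (?S * ?T)" unfolding ST using Qb by simp
  also have "\<dots> = (?Qb * ?S) * ?T" using assoc_mult_mat[OF Qb S T] by simp
  also have "\<dots> = ?S * Bm n t E * ?T" unfolding QS ..
  finally have "?Qb = ?S * Bm n t E * ?T" .
  then have "similar_mat ?Qb (Bm n t E)"
    by (intro similar_matI[OF _ ST TS], insert Qb B S T, auto)
  then show ?thesis unfolding N_def .
qed



definition pp :: "nat \<Rightarrow> nat \<Rightarrow> nat \<Rightarrow> nat" where
  "pp n s i = (if i < n then i * Suc s else if i < n * Suc s then ((i - n) div s) * Suc s + ((i - n) mod s + 1) else i)"

lemma dm_aux: "(t::nat) > 0 \<Longrightarrow> a < t \<Longrightarrow> (a + q*t) div t = q \<and> (a + q*t) mod t = a"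
  by simp

lemma pp_lt: "i < n \<Longrightarrow> pp n s i div Suc s = i \<and> pp n s i mod Suc s = 0"
  unfolding pp_def using dm_aux[of "Suc s" 0 i] by simp

lemma pp_ge_s: "n \<le> i \<Longrightarrow> i < n * Suc s \<Longrightarrow> s > 0"
  by (cases s) auto

lemma pp_ge: assumes "n \<le> i" "i < n * Suc s"
  shows "pp n s i div Suc s = (i - n) div s \<and> pp n s i mod Suc s = (i - n) mod s + 1"
proof -
  have s: "s > 0" using pp_ge_s[OF assms] .
  have lt: "(i - n) mod s + 1 < Suc s" using s by simp
  have "pp n s i = ((i - n) mod s + 1) + ((i - n) div s) * Suc s" using assms unfolding pp_def by simp
  then show ?thesis using lt dm_aux[of "Suc s" "(i - n) mod s + 1" "(i - n) div s"] by (simp only:)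
qed

lemma pp_bound: assumes "i < n * Suc s" shows "pp n s i < n * Suc s"
proof (cases "i < n")
  case True
  have "i * Suc s < n * Suc s" using True by (intro mult_less_mono1) simp_all
  then show ?thesis using True unfolding pp_def by simp
next
  case False
  have s: "s > 0" using pp_ge_s[of n i s] False assms by simp
  have r: "i - n < n * s" using False assms by simp
  then have q: "(i - n) div s < n" using s by (simp add: div_less_iff_less_mult mult.commute)
  have "((i - n) div s) * Suc s + ((i - n) mod s + 1) < ((i - n) div s) * Suc s + Suc s"
    by (rule add_strict_left_mono) (use s in simp)
  also have "\<dots> = ((i - n) div s + 1) * Suc s" by simp
  also have "\<dots> \<le> n * Suc s" using q by (intro mult_le_mono1) simp
  finally show ?thesis using False assms unfolding pp_def by simp
qed

lemma pp_inj: "inj_on (pp n s) {0..<n * Suc s}"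
proof (rule inj_onI)
  fix i j assume i: "i \<in> {0..<n * Suc s}" and j: "j \<in> {0..<n * Suc s}" and e: "pp n s i = pp n s j"
  have d: "pp n s i div Suc s = pp n s j div Suc s" and m: "pp n s i mod Suc s = pp n s j mod Suc s" using e by auto
  show "i = j"
  proof (cases "i < n"; cases "j < n")
    assume "i < n" "j < n" then show ?thesis using d pp_lt by metis
  next
    assume "i < n" "\<not> j < n" then show ?thesis using m pp_lt[of i n s] pp_ge[of n j s] j by simp
  next
    assume "\<not> i < n" "j < n" then show ?thesis using m pp_lt[of j n s] pp_ge[of n i s] i by simp
  next
    assume a: "\<not> i < n" "\<not> j < n"
    have s: "s > 0" using pp_ge_s[of n i s] a i by simp
    have "(i - n) div s = (j - n) div s" "(i - n) mod s = (j - n) mod s"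
      using d m pp_ge[of n i s] pp_ge[of n j s] a i j by auto
    then have "i - n = j - n" using eq_div_mod[OF s] by blast
    then show ?thesis using a by simp
  qed
qed

lemma pp_permutes: "pp n s permutes {0..<n * Suc s}"
proof -
  have sub: "pp n s ` {0..<n * Suc s} \<subseteq> {0..<n * Suc s}" using pp_bound by auto
  have "pp n s ` {0..<n * Suc s} = {0..<n * Suc s}"
    by (rule endo_inj_surj[OF _ sub pp_inj]) simp
  then have "bij_betw (pp n s) {0..<n * Suc s} {0..<n * Suc s}" using pp_inj by (simp add: bij_betw_def)
  moreover have "\<forall>x. x \<notin> {0..<n * Suc s} \<longrightarrow> pp n s x = x" unfolding pp_def by auto
  ultimately show ?thesis by (intro bij_imp_permutes) auto
qed



lemma block_form:
  fixes n s :: nat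
  defines "t \<equiv> Suc s"
  shows "mat (n*t) (n*t) (\<lambda>(i,j). Bm n t E $$ (pp n s i, pp n s j)) =
    four_block_mat (real t \<cdot>\<^sub>m signless_laplacian n E)
      (mat n (n*s) (\<lambda>(i,j). Am E i (j div s))) (0\<^sub>m (n*s) n)
      (mat (n*s) (n*s) (\<lambda>(i,j). if i = j then real t * real (degree_of n E (i div s)) else 0))"
  (is "?L = ?R")
proof (rule eq_matI)
  have Q: "signless_laplacian n E \<in> carrier_mat n n"
    by (simp add: signless_laplacian_def degree_matrix_def adjacency_matrix_def)
  show "dim_row ?L = dim_row ?R" "dim_col ?L = dim_col ?R" using Q by (auto simp: t_def)
  fix i j assume "i < dim_row ?R" "j < dim_col ?R"
  then have i: "i < n * Suc s" and j: "j < n * Suc s" using Q by auto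
  have pi: "pp n s i < n * Suc s" and pj: "pp n s j < n * Suc s" using pp_bound i j by auto
  have L: "?L $$ (i,j) = Bm n t E $$ (pp n s i, pp n s j)" using i j by (simp add: t_def)
  have Bij: "Bm n t E $$ (pp n s i, pp n s j) = 
     (if pp n s j mod t = 0 then (if pp n s i mod t = 0 then real t * ((if pp n s i div t = pp n s j div t then real (degree_of n E (pp n s j div t)) else 0) + Am E (pp n s i div t) (pp n s j div t)) else 0)
     else (if pp n s i mod t = 0 then Am E (pp n s i div t) (pp n s j div t)
           else (if pp n s i div t = pp n s j div t \<and> pp n s i mod t = pp n s j mod t then real t * real (degree_of n E (pp n s j div t)) else 0)))"
    unfolding Bm_def t_def using pi pj by simp
  show "?L $$ (i,j) = ?R $$ (i,j)"
  proof (cases "i < n"; cases "j < n")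
    assume a: "i < n" "j < n"
    show ?thesis unfolding L Bij using a pp_lt[of i n s] pp_lt[of j n s] Q
      by (simp add: index_mat_four_block t_def Q_entry)
  next
    assume a: "i < n" "\<not> j < n"
    show ?thesis unfolding L Bij using a pp_lt[of i n s] pp_ge[of n j s] j Q
      by (simp add: index_mat_four_block t_def)
  next
    assume a: "\<not> i < n" "j < n"
    show ?thesis unfolding L Bij using a pp_lt[of j n s] pp_ge[of n i s] i Q
      by (simp add: index_mat_four_block t_def)
  next
    assume a: "\<not> i < n" "\<not> j < n"
    have s: "s > 0" using pp_ge_s[of n i s] a i by simp
    have e: "((i - n) div s = (j - n) div s \<and> (i - n) mod s = (j - n) mod s) \<longleftrightarrow> i = j"
      using eq_div_mod[OF s, of "i - n" "j - n"] a by auto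
    show ?thesis unfolding L Bij using a pp_ge[of n j s] pp_ge[of n i s] i j Q e
      by (auto simp: index_mat_four_block t_def)
  qed
qed



theorem theorem2:
  fixes n t :: nat and E :: "nat \<Rightarrow> nat \<Rightarrow> bool"
  assumes "simple_graph n E" and "t \<ge> 1"
  shows "eigenvalues_mset (signless_laplacian (n * t) (blow_up t E)) =
           image_mset (\<lambda>q. real t * q) (eigenvalues_mset (signless_laplacian n E))
         + repeat_mset (t - 1)
             (image_mset (\<lambda>i. real t * real (degree_of n E i)) (mset_set {0..<n}))"
proof -
  obtain s where ts: "t = Suc s" using assms(2) by (cases t) auto
  have t: "t > 0" using Bm_carrier[of n t E] ts by simp
  let ?Q = "signless_laplacian n E"
  let ?X = "mat n (n*s) (\<lambda>(i,j). Am E i (j div s))"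
  let ?D = "mat (n*s) (n*s) (\<lambda>(i,j). if i = j then real t * real (degree_of n E (i div s)) else 0)"
  have Q: "?Q \<in> carrier_mat n n"
    by (simp add: signless_laplacian_def degree_matrix_def adjacency_matrix_def)
  have B: "Bm n t E \<in> carrier_mat (n * Suc s) (n * Suc s)" using Bm_carrier[of n t E] ts by simp
  have "char_poly (signless_laplacian (n * t) (blow_up t E)) = char_poly (Bm n t E)"
    by (rule char_poly_similar[OF similar_Qb_Bm[OF t]])
  also have "\<dots> = char_poly (mat (n*t) (n*t) (\<lambda>(i,j). Bm n t E $$ (pp n s i, pp n s j)))"
    using char_poly_permute[OF B pp_permutes] ts by simp
  also have "\<dots> = char_poly (four_block_mat (real t \<cdot>\<^sub>m ?Q) ?X (0\<^sub>m (n*s) n) ?D)"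
    unfolding ts by (rule arg_cong[where f=char_poly], rule block_form)
  also have "\<dots> = char_poly (real t \<cdot>\<^sub>m ?Q) * char_poly ?D"
    by (rule char_poly_four_block_ll0, insert Q, auto)
  finally have cp: "char_poly (signless_laplacian (n * t) (blow_up t E)) = char_poly (real t \<cdot>\<^sub>m ?Q) * char_poly ?D" .
  have nz1: "char_poly (real t \<cdot>\<^sub>m ?Q) \<noteq> 0" by (rule char_poly_nz, insert Q, auto)
  have nz2: "char_poly ?D \<noteq> 0" by (rule char_poly_nz[of _ "n*s"]) simp
  have "eigenvalues_mset (signless_laplacian (n * t) (blow_up t E)) =
      proots (char_poly (real t \<cdot>\<^sub>m ?Q)) + proots (char_poly ?D)"
    unfolding eigenvalues_mset_def cp using nz1 nz2 by (simp add: proots_mult)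
  also have "proots (char_poly (real t \<cdot>\<^sub>m ?Q)) = image_mset ((*) (real t)) (proots (char_poly ?Q))"
    by (rule proots_char_poly_smult[OF Q]) (use t in simp)
  also have "proots (char_poly ?D) = mset (map (\<lambda>i. real t * real (degree_of n E (i div s))) [0..<n*s])"
    by (rule proots_char_poly_diag)
  also have "\<dots> = repeat_mset s (image_mset (\<lambda>i. real t * real (degree_of n E i)) (mset_set {0..<n}))"
    by (rule mset_blocks)
  finally show ?thesis unfolding eigenvalues_mset_def using Bm_carrier[of n t E] ts by simp
qed

end
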